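(* For every elementary pair $(p,q)$ of partial isomorphisms of $\mathbb{Q}$ there is a triple $(p',q',w)$ that liberates $p$ in $(p,q)$, and there is a triple that liberates $q$ in $(p,q)$.
   Context: A partial isomorphism of $\mathbb{Q}$ is an order-preserving bijection $p$ between finite subsets $\mathrm{dom}(p),\mathrm{ran}(p)$ of $\mathbb{Q}$; $p'\supseteq p$ means $p'$ extends $p$; $\mathrm{Fix}(p)=\{c\in\mathrm{dom}(p):p(c)=c\}$. An open interval $(a,b)$ is $p$-increasing if $a,b\in\mathrm{dom}(p)$, $p(a)=a$, $p(b)=b$ and $p(c)>c$ for all $c\in\mathrm{dom}(p)\cap(a,b)$; $p$-decreasing likewise with $p(c)<c$; $p$-monotone means either. Writing $\mathrm{dom}(p)=\{a_0<\dots<a_n\}$, $p$ is informative if $p(a_0)=a_0$, $p(a_n)=a_n$ and there are indices $0=i_0<\dots<i_r=n$ with $p(a_{i_k})=a_{i_k}$ and each $(a_{i_k},a_{i_{k+1}})$ $p$-monotone; then $\mathrm{Ess}(p)=(\mathrm{dom}(p)\cup\mathrm{ran}(p))\setminus\{a_0,a_n\}$. A pair $(p,q)$ is elementary if $p,q$ are informative, $\min\mathrm{dom}(p)=\min\mathrm{dom}(q)$, $\max\mathrm{dom}(p)=\max\mathrm{dom}(q)$, and $\mathrm{Fix}(p)\cap\mathrm{Fix}(q)$ consists only of this min and max. Words: $F(s,t)$ free group; for reduced $w=t^{n_k}s^{m_k}\cdots t^{n_1}s^{m_1}$, $w(p,q)(c)=q^{n_k}p^{m_k}\cdots q^{n_1}p^{m_1}(c)$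 when defined (rightmost letter acts first); "$w=t^nv$" means the product is reduced. Liberation: for an elementary pair $(p,q)$, a triple $(p',q',w)$ with $p'\supseteq p$, $q'\supseteq q$ partial isomorphisms and $w$ reduced liberates $p$ in $(p,q)$ if: (i) $p',q'$ are informative; (ii) $\min\mathrm{dom}(p')=\min\mathrm{dom}(p)$, $\min\mathrm{dom}(q')=\min\mathrm{dom}(q)$, $\max\mathrm{dom}(p')=\max\mathrm{dom}(p)$, $\max\mathrm{dom}(q')=\max\mathrm{dom}(q)$; (iii) $w=t^nv$ with $n\neq0$; (iv) $w(p',q')(c)$ is defined for all $c\in\mathrm{Ess}(p)\cup\mathrm{Ess}(q)$ and $w(p',q')(\min(\mathrm{Ess}(p)\cup\mathrm{Ess}(q)))>\max\mathrm{Ess}(p')$; (v) there is an open interval $J$ whose right endpoint is $\max\mathrm{dom}(q)$, with $w(p',q')(c)\in J$ for all $c\in\mathrm{Ess}(p)\cup\mathrm{Ess}(q)$, and $J$ is $q'$-increasing if $n>0$ and $q'$-decreasing if $n<0$. The triple liberates $q$ in $(p,q)$ if the same holds with the roles of $p,q$ and of $s,t$ interchanged (so $w=s^nv$, $n\ne0$, the bound in (iv) is $>\max\mathrm{Ess}(q')$, and $J$ has right endpoint $\max\mathrm{dom}(p)$ and is $p'$-increasing/decreasing according to the sign of $n$). *)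

theory Defs
  imports Main "HOL.Rat"
begin

definition partial_iso :: "(rat \<rightharpoonup> rat) \<Rightarrow> bool" where
  "partial_iso p \<longleftrightarrow> finite (dom p) \<and>
     (\<forall>x\<in>dom p. \<forall>y\<in>dom p. x < y \<longrightarrow> the (p x) < the (p y))"

definition Fix :: "(rat \<rightharpoonup> rat) \<Rightarrow> rat set" where
  "Fix p = {c \<in> dom p. p c = Some c}"

definition increasing_interval :: "(rat \<rightharpoonup> rat) \<Rightarrow> rat \<Rightarrow> rat \<Rightarrow> bool" where
  "increasing_interval p a b \<longleftrightarrow> p a = Some a \<and> p b = Some b \<and>
     (\<forall>c \<in> dom p \<inter> {a<..<b}. the (p c) > c)"

definition decreasing_interval :: "(rat \<rightharpoonup> rat) \<Rightarrow> rat \<Rightarrow> rat \<Rightarrow> bool" where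
  "decreasing_interval p a b \<longleftrightarrow> p a = Some a \<and> p b = Some b \<and>
     (\<forall>c \<in> dom p \<inter> {a<..<b}. the (p c) < c)"

definition monotone_interval :: "(rat \<rightharpoonup> rat) \<Rightarrow> rat \<Rightarrow> rat \<Rightarrow> bool" where
  "monotone_interval p a b \<longleftrightarrow> increasing_interval p a b \<or> decreasing_interval p a b"

text \<open>Informative: the list xs plays the role of a_{i_0} < ... < a_{i_r}.\<close>
definition informative :: "(rat \<rightharpoonup> rat) \<Rightarrow> bool" where
  "informative p \<longleftrightarrow> dom p \<noteq> {} \<and>
     p (Min (dom p)) = Some (Min (dom p)) \<and> p (Max (dom p)) = Some (Max (dom p)) \<and>
     (\<exists>xs. xs \<noteq> [] \<and> sorted_wrt (<) xs \<and> hd xs = Min (dom p) \<and> last xs = Max (dom p) \<and>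
        (\<forall>x \<in> set xs. p x = Some x) \<and>
        (\<forall>i. i + 1 < length xs \<longrightarrow> monotone_interval p (xs ! i) (xs ! (i + 1))))"

definition Ess :: "(rat \<rightharpoonup> rat) \<Rightarrow> rat set" where
  "Ess p = (dom p \<union> ran p) - {Min (dom p), Max (dom p)}"

definition elementary_pair :: "(rat \<rightharpoonup> rat) \<Rightarrow> (rat \<rightharpoonup> rat) \<Rightarrow> bool" where
  "elementary_pair p q \<longleftrightarrow> partial_iso p \<and> partial_iso q \<and>
     informative p \<and> informative q \<and>
     Min (dom p) = Min (dom q) \<and> Max (dom p) = Max (dom q) \<and>
     Fix p \<inter> Fix q = {Min (dom p), Max (dom p)}"

datatype gen = S | T

text \<open>A word is a list of letters (generator, sign); True = positive exponent.
  The head of the list is the leftmost letter (which acts last).\<close>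
type_synonym word = "(gen \<times> bool) list"

definition reduced :: "word \<Rightarrow> bool" where
  "reduced w \<longleftrightarrow> (\<forall>i. i + 1 < length w \<longrightarrow>
      \<not> (fst (w ! i) = fst (w ! (i + 1)) \<and> snd (w ! i) \<noteq> snd (w ! (i + 1))))"

definition inv_pm :: "(rat \<rightharpoonup> rat) \<Rightarrow> (rat \<rightharpoonup> rat)" where
  "inv_pm p y = (if y \<in> ran p then Some (THE x. p x = Some y) else None)"

fun act :: "(rat \<rightharpoonup> rat) \<Rightarrow> (rat \<rightharpoonup> rat) \<Rightarrow> gen \<times> bool \<Rightarrow> (rat \<rightharpoonup> rat)" where
  "act p q (S, True) = p"
| "act p q (S, False) = inv_pm p"
| "act p q (T, True) = q"
| "act p q (T, False) = inv_pm q"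

text \<open>word_eval p q w c = w(p,q)(c): the rightmost letter acts first; None = undefined.\<close>
fun word_eval :: "(rat \<rightharpoonup> rat) \<Rightarrow> (rat \<rightharpoonup> rat) \<Rightarrow> word \<Rightarrow> rat \<rightharpoonup> rat" where
  "word_eval p q [] c = Some c"
| "word_eval p q (l # w) c = (case word_eval p q w c of None \<Rightarrow> None | Some d \<Rightarrow> act p q l d)"

definition liberates_p ::
  "(rat \<rightharpoonup> rat) \<Rightarrow> (rat \<rightharpoonup> rat) \<Rightarrow> (rat \<rightharpoonup> rat) \<Rightarrow> (rat \<rightharpoonup> rat) \<Rightarrow> word \<Rightarrow> bool" where
  "liberates_p p q p' q' w \<longleftrightarrow>
     partial_iso p' \<and> partial_iso q' \<and> p \<subseteq>\<^sub>m p' \<and> q \<subseteq>\<^sub>m q' \<and> reduced w \<and>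
     informative p' \<and> informative q' \<and>
     Min (dom p') = Min (dom p) \<and> Min (dom q') = Min (dom q) \<and>
     Max (dom p') = Max (dom p) \<and> Max (dom q') = Max (dom q) \<and>
     w \<noteq> [] \<and> fst (hd w) = T \<and>
     (\<forall>c \<in> Ess p \<union> Ess q. word_eval p' q' w c \<noteq> None) \<and>
     (Ess p \<union> Ess q \<noteq> {} \<longrightarrow>
        (\<forall>e \<in> Ess p'. the (word_eval p' q' w (Min (Ess p \<union> Ess q))) > e)) \<and>
     (\<exists>a. (\<forall>c \<in> Ess p \<union> Ess q. the (word_eval p' q' w c) \<in> {a<..<Max (dom q)}) \<and>
          (if snd (hd w) then increasing_interval q' a (Max (dom q))
           else decreasing_interval q' a (Max (dom q))))"

definition liberates_q ::
  "(rat \<rightharpoonup> rat) \<Rightarrow> (rat \<rightharpoonup> rat) \<Rightarrow> (rat \<rightharpoonup> rat) \<Rightarrow> (rat \<rightharpoonup> rat) \<Rightarrow> word \<Rightarrow> bool" where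
  "liberates_q p q p' q' w \<longleftrightarrow>
     partial_iso p' \<and> partial_iso q' \<and> p \<subseteq>\<^sub>m p' \<and> q \<subseteq>\<^sub>m q' \<and> reduced w \<and>
     informative p' \<and> informative q' \<and>
     Min (dom p') = Min (dom p) \<and> Min (dom q') = Min (dom q) \<and>
     Max (dom p') = Max (dom p) \<and> Max (dom q') = Max (dom q) \<and>
     w \<noteq> [] \<and> fst (hd w) = S \<and>
     (\<forall>c \<in> Ess p \<union> Ess q. word_eval p' q' w c \<noteq> None) \<and>
     (Ess p \<union> Ess q \<noteq> {} \<longrightarrow>
        (\<forall>e \<in> Ess q'. the (word_eval p' q' w (Min (Ess p \<union> Ess q))) > e)) \<and>
     (\<exists>a. (\<forall>c \<in> Ess p \<union> Ess q. the (word_eval p' q' w c) \<in> {a<..<Max (dom p)}) \<and>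
          (if snd (hd w) then increasing_interval p' a (Max (dom p))
           else decreasing_interval p' a (Max (dom p))))"

end

theory Submission
  imports Defs
begin


lemma pi_lt: "partial_iso r \<Longrightarrow> r x = Some a \<Longrightarrow> r y = Some b \<Longrightarrow> x < y \<Longrightarrow> a < b"
  unfolding partial_iso_def by (metis domI option.sel)

lemma pi_le: "partial_iso r \<Longrightarrow> r x = Some a \<Longrightarrow> r y = Some b \<Longrightarrow> x \<le> y \<Longrightarrow> a \<le> b"
  using pi_lt by (metis order.order_iff_strict option.inject)

lemma pi_lt_rev: "partial_iso r \<Longrightarrow> r x = Some a \<Longrightarrow> r y = Some b \<Longrightarrow> a < b \<Longrightarrow> x < y"
  using pi_le by (meson not_le)

lemma pi_inj: "partial_iso r \<Longrightarrow> r x = Some a \<Longrightarrow> r y = Some a \<Longrightarrow> x = y"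
  using pi_lt by (metis less_irrefl linorder_neqE)

lemma inv_pm_Some: "partial_iso r \<Longrightarrow> inv_pm r y = Some x \<longleftrightarrow> r x = Some y"
proof
  assume pi: "partial_iso r"
  { assume "inv_pm r y = Some x"
    then have y: "y \<in> ran r" and x: "x = (THE x. r x = Some y)" unfolding inv_pm_def by (auto split: if_splits)
    from y obtain x0 where x0: "r x0 = Some y" by (auto simp: ran_def)
    have "(THE x. r x = Some y) = x0" using x0 pi_inj[OF pi] by blast
    then show "r x = Some y" using x x0 by simp }
  { assume h: "r x = Some y"
    then have y: "y \<in> ran r" by (auto simp: ran_def)
    have "(THE x. r x = Some y) = x" using h pi_inj[OF pi] by blast
    then show "inv_pm r y = Some x" using y unfolding inv_pm_def by simp }
qed

lemma dom_inv_pm: "dom (inv_pm r) = ran r"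
  unfolding inv_pm_def dom_def by auto

lemma ran_inv_pm: "partial_iso r \<Longrightarrow> ran (inv_pm r) = dom r"
  by (auto simp: ran_def inv_pm_Some)

lemma finite_ran_pi: "partial_iso r \<Longrightarrow> finite (ran r)"
  unfolding partial_iso_def by (simp add: finite_ran)

lemma pi_inv: "partial_iso r \<Longrightarrow> partial_iso (inv_pm r)"
  unfolding partial_iso_def[of "inv_pm r"]
proof (intro conjI ballI impI)
  assume pi: "partial_iso r"
  show "finite (dom (inv_pm r))" using finite_ran_pi[OF pi] by (simp add: dom_inv_pm)
  fix x y assume x: "x \<in> dom (inv_pm r)" and y: "y \<in> dom (inv_pm r)" and xy: "x < y"
  obtain a where a: "inv_pm r x = Some a" using x by auto
  obtain b where b: "inv_pm r y = Some b" using y by auto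
  have "r a = Some x" "r b = Some y" using a b inv_pm_Some[OF pi] by auto
  then have "a < b" using pi_lt_rev[OF pi] xy by blast
  then show "the (inv_pm r x) < the (inv_pm r y)" using a b by simp
qed

lemma inv_inv_pm: "partial_iso r \<Longrightarrow> inv_pm (inv_pm r) = r"
proof
  fix x assume pi: "partial_iso r"
  have pi2: "partial_iso (inv_pm r)" using pi_inv[OF pi] .
  show "inv_pm (inv_pm r) x = r x"
  proof (cases "r x")
    case None
    then have "inv_pm (inv_pm r) x = None"
      using inv_pm_Some[OF pi2] inv_pm_Some[OF pi] by (metis not_None_eq)
    then show ?thesis using None by simp
  next
    case (Some y)
    then show ?thesis using inv_pm_Some[OF pi2] inv_pm_Some[OF pi] by simp
  qed
qed

lemma inv_pm_mono: "r \<subseteq>\<^sub>m r' \<Longrightarrow> partial_iso r \<Longrightarrow> partial_iso r' \<Longrightarrow> inv_pm r \<subseteq>\<^sub>m inv_pm r'"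
  unfolding map_le_def
proof
  fix y assume le: "\<forall>a\<in>dom r. r a = r' a" and pi: "partial_iso r" and pi': "partial_iso r'"
    and y: "y \<in> dom (inv_pm r)"
  obtain x where x: "inv_pm r y = Some x" using y by auto
  then have "r x = Some y" using inv_pm_Some[OF pi] by simp
  then have "r' x = Some y" using le by (metis domI)
  then show "inv_pm r y = inv_pm r' y" using x inv_pm_Some[OF pi'] by metis
qed



definition good :: "(rat \<rightharpoonup> rat) \<Rightarrow> rat list \<Rightarrow> (nat \<Rightarrow> bool) \<Rightarrow> bool" where
  "good r xs d \<longleftrightarrow> partial_iso r \<and> sorted_wrt (<) xs \<and> xs \<noteq> [] \<and>
     dom r \<subseteq> {hd xs..last xs} \<and> (\<forall>x\<in>set xs. r x = Some x) \<and>
     (\<forall>i. i + 1 < length xs \<longrightarrow> (if d i then increasing_interval r (xs!i) (xs!(i+1))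
                                   else decreasing_interval r (xs!i) (xs!(i+1))))"

lemma sorted_hd_le: "sorted_wrt (<) xs \<Longrightarrow> x \<in> set xs \<Longrightarrow> hd xs \<le> (x::rat)"
  by (induction xs) auto

lemma sorted_le_last: "sorted_wrt (<) xs \<Longrightarrow> x \<in> set xs \<Longrightarrow> x \<le> last (xs::rat list)"
  by (induction xs) (auto simp: less_imp_le)

lemma sorted_nth_lt: "sorted_wrt (<) xs \<Longrightarrow> i < j \<Longrightarrow> j < length xs \<Longrightarrow> xs!i < (xs!j::rat)"
  by (simp add: sorted_wrt_iff_nth_less)

lemma sorted_nth_le: "sorted_wrt (<) xs \<Longrightarrow> i \<le> j \<Longrightarrow> j < length xs \<Longrightarrow> xs!i \<le> (xs!j::rat)"
  by (metis order.order_iff_strict sorted_nth_lt)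

lemma find_interval:
  "xs \<noteq> [] \<Longrightarrow> sorted_wrt (<) xs \<Longrightarrow> hd xs < v \<Longrightarrow> v < last xs \<Longrightarrow> v \<notin> set xs \<Longrightarrow>
   \<exists>i. i + 1 < length xs \<and> xs!i < v \<and> v < xs!(i+1)" for v :: rat
proof (induction xs)
  case Nil then show ?case by simp
next
  case (Cons x xs)
  show ?case
  proof (cases "xs = []")
    case True then show ?thesis using Cons.prems by simp
  next
    case ne: False
    show ?thesis
    proof (cases "v < hd xs")
      case True
      then show ?thesis using ne Cons.prems by (intro exI[of _ 0]) (auto simp: hd_conv_nth)
    next
      case False
      have "v \<noteq> hd xs" using ne Cons.prems by auto
      then have "hd xs < v" using False by simp
      moreover have "v < last xs" using Cons.prems ne by auto
      ultimately obtain i where "i + 1 < length xs \<and> xs!i < v \<and> v < xs!(i+1)"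
        using Cons.IH Cons.prems ne by auto
      then show ?thesis by (intro exI[of _ "Suc i"]) auto
    qed
  qed
qed

lemma good_pi: "good r xs d \<Longrightarrow> partial_iso r" by (simp add: good_def)

lemma good_fix: "good r xs d \<Longrightarrow> x \<in> set xs \<Longrightarrow> r x = Some x" by (simp add: good_def)

lemma good_hd: "good r xs d \<Longrightarrow> r (hd xs) = Some (hd xs)"
  by (simp add: good_def)

lemma good_last: "good r xs d \<Longrightarrow> r (last xs) = Some (last xs)"
  by (simp add: good_def)

lemma good_dom: "good r xs d \<Longrightarrow> x \<in> dom r \<Longrightarrow> hd xs \<le> x \<and> x \<le> last xs"
  unfolding good_def by auto

lemma good_ran: "good r xs d \<Longrightarrow> r x = Some y \<Longrightarrow> hd xs \<le> y \<and> y \<le> last xs"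
proof -
  assume g: "good r xs d" and rx: "r x = Some y"
  have "hd xs \<le> x" "x \<le> last xs" using good_dom[OF g] rx by auto
  then show ?thesis using pi_le[OF good_pi[OF g]] good_hd[OF g] good_last[OF g] rx by blast
qed

lemma good_open: "good r xs d \<Longrightarrow> r x = Some y \<Longrightarrow> hd xs < x \<Longrightarrow> x < last xs \<Longrightarrow> hd xs < y \<and> y < last xs"
  using pi_lt[OF good_pi] good_hd good_last by blast

lemma good_Min: "good r xs d \<Longrightarrow> Min (dom r) = hd xs"
proof -
  assume g: "good r xs d"
  have fin: "finite (dom r)" using good_pi[OF g] unfolding partial_iso_def by simp
  have "hd xs \<in> dom r" using good_hd[OF g] by auto
  then show ?thesis using good_dom[OF g] fin by (intro Min_eqI) auto
qed

lemma good_Max: "good r xs d \<Longrightarrow> Max (dom r) = last xs"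
proof -
  assume g: "good r xs d"
  have fin: "finite (dom r)" using good_pi[OF g] unfolding partial_iso_def by simp
  have "last xs \<in> dom r" using good_last[OF g] by auto
  then show ?thesis using good_dom[OF g] fin by (intro Max_eqI) auto
qed

lemma good_informative: "good r xs d \<Longrightarrow> informative r"
proof -
  assume g: "good r xs d"
  have h: "hd xs \<in> dom r" using good_hd[OF g] by auto
  have m: "\<forall>i. i + 1 < length xs \<longrightarrow> monotone_interval r (xs ! i) (xs ! (i + 1))"
    using g unfolding good_def monotone_interval_def by metis
  show ?thesis unfolding informative_def good_Min[OF g] good_Max[OF g]
  proof (intro conjI exI[of _ xs])
  qed (use g h m in \<open>auto simp: good_def\<close>)
qed

lemma informative_good:
  assumes "informative p" "partial_iso p"
  shows "\<exists>xs d. good p xs d \<and> hd xs = Min (dom p) \<and> last xs = Max (dom p)"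
proof -
  from assms(1) obtain xs where ne: "dom p \<noteq> {}" and xs: "xs \<noteq> []" "sorted_wrt (<) xs" "hd xs = Min (dom p)"
    "last xs = Max (dom p)" "\<forall>x \<in> set xs. p x = Some x"
    "\<forall>i. i + 1 < length xs \<longrightarrow> monotone_interval p (xs ! i) (xs ! (i + 1))"
    unfolding informative_def by blast
  have fin: "finite (dom p)" using assms(2) unfolding partial_iso_def by simp
  define d where "d i = increasing_interval p (xs!i) (xs!(i+1))" for i
  have "\<forall>x\<in>dom p. Min (dom p) \<le> x \<and> x \<le> Max (dom p)" using fin by simp
  then have "dom p \<subseteq> {hd xs..last xs}" using xs(3,4) by auto
  then have "good p xs d" unfolding good_def
    using xs assms(2) unfolding d_def monotone_interval_def by auto
  then show ?thesis using xs by blast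
qed

lemma good_inv: "good r xs d \<Longrightarrow> good (inv_pm r) xs (\<lambda>i. \<not> d i)"
proof -
  assume g: "good r xs d"
  have pi: "partial_iso r" using good_pi[OF g] .
  have a: "partial_iso (inv_pm r)" using pi_inv[OF pi] .
  have b: "dom (inv_pm r) \<subseteq> {hd xs..last xs}"
    unfolding dom_inv_pm using good_ran[OF g] by (auto simp: ran_def)
  have c: "\<forall>x\<in>set xs. inv_pm r x = Some x" using good_fix[OF g] inv_pm_Some[OF pi] by simp
  have e: "if \<not> d i then increasing_interval (inv_pm r) (xs!i) (xs!(i+1))
           else decreasing_interval (inv_pm r) (xs!i) (xs!(i+1))" if i: "i + 1 < length xs" for i
  proof -
    have fa: "r (xs!i) = Some (xs!i)" "r (xs!(i+1)) = Some (xs!(i+1))"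
      using good_fix[OF g] i by auto
    have ia: "inv_pm r (xs!i) = Some (xs!i)" "inv_pm r (xs!(i+1)) = Some (xs!(i+1))"
      using fa inv_pm_Some[OF pi] by auto
    have key: "\<exists>x. r x = Some c \<and> xs!i < x \<and> x < xs!(i+1) \<and> inv_pm r c = Some x"
      if cd: "c \<in> dom (inv_pm r)" and cc: "xs!i < c" "c < xs!(i+1)" for c
    proof -
      from cd obtain x where x: "inv_pm r c = Some x" by auto
      then have rx: "r x = Some c" using inv_pm_Some[OF pi] by simp
      have "xs!i < x" using pi_lt_rev[OF pi fa(1) rx] cc by simp
      moreover have "x < xs!(i+1)" using pi_lt_rev[OF pi rx fa(2)] cc by simp
      ultimately show ?thesis using rx x by blast
    qed
    show ?thesis
    proof (cases "d i")
      case True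
      then have inc: "increasing_interval r (xs!i) (xs!(i+1))" using g i unfolding good_def by auto
      have "the (inv_pm r c) < c" if cin: "c \<in> dom (inv_pm r) \<inter> {xs!i<..<xs!(i+1)}" for c
      proof -
        obtain x where x: "r x = Some c" "xs!i < x" "x < xs!(i+1)" "inv_pm r c = Some x"
          using key cin by auto
        have "x \<in> dom r \<inter> {xs!i<..<xs!(i+1)}" using x by auto
        then have "the (r x) > x" using inc unfolding increasing_interval_def by blast
        then show ?thesis using x by simp
      qed
      then show ?thesis using True ia unfolding decreasing_interval_def by auto
    next
      case False
      then have inc: "decreasing_interval r (xs!i) (xs!(i+1))" using g i unfolding good_def by auto
      have "the (inv_pm r c) > c" if cin: "c \<in> dom (inv_pm r) \<inter> {xs!i<..<xs!(i+1)}" for c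
      proof -
        obtain x where x: "r x = Some c" "xs!i < x" "x < xs!(i+1)" "inv_pm r c = Some x"
          using key cin by auto
        have "x \<in> dom r \<inter> {xs!i<..<xs!(i+1)}" using x by auto
        then have "the (r x) < x" using inc unfolding decreasing_interval_def by blast
        then show ?thesis using x by simp
      qed
      then show ?thesis using False ia unfolding increasing_interval_def by auto
    qed
  qed
  show ?thesis unfolding good_def using a b c e g unfolding good_def by blast
qed



lemma interval_unique:
  fixes xs :: "rat list"
  assumes "sorted_wrt (<) xs" "i + 1 < length xs" "j + 1 < length xs"
    "xs!i < v" "v < xs!(i+1)" "xs!j < v" "v < xs!(j+1)"
  shows "i = j"
proof (rule ccontr)
  assume "i \<noteq> j"
  then consider "j + 1 \<le> i" | "i + 1 \<le> j" by linarith
  then show False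
  proof cases
    case 1
    then have "xs!(j+1) \<le> xs!i" using sorted_nth_le[OF assms(1) 1] assms by linarith
    then show False using assms by simp
  next
    case 2
    then have "xs!(i+1) \<le> xs!j" using sorted_nth_le[OF assms(1) 2] assms by linarith
    then show False using assms by simp
  qed
qed

lemma nth_in_hd_last:
  assumes "sorted_wrt (<) xs" "k < length xs"
  shows "hd xs \<le> xs!k \<and> xs!k \<le> (last xs::rat)"
  using assms sorted_hd_le sorted_le_last nth_mem by blast

lemma ext_gen:
  assumes g: "good r xs d" and i: "i+1 < length xs" "xs!i < v" "v < xs!(i+1)" and v: "v \<notin> dom r"
    and lohi: "lo < hi" and lo: "\<forall>x\<in>dom r. v < x \<longrightarrow> lo < the (r x)"
    and hi: "\<forall>x\<in>dom r. x < v \<longrightarrow> the (r x) < hi"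
    and dl: "d i \<Longrightarrow> v \<le> lo" and dh: "\<not> d i \<Longrightarrow> hi \<le> v"
  shows "\<exists>z. lo < z \<and> z < hi \<and> good (r(v \<mapsto> z)) xs d"
proof -
  have pi: "partial_iso r" using good_pi[OF g] .
  have fin: "finite (dom r)" using pi unfolding partial_iso_def by simp
  have sxs: "sorted_wrt (<) xs" and ne: "xs \<noteq> []" using g unfolding good_def by auto
  define A where "A = (\<lambda>x. the (r x)) ` {x\<in>dom r. x < v}"
  define B where "B = (\<lambda>x. the (r x)) ` {x\<in>dom r. v < x}"
  define L where "L = Max (insert lo A)"
  define U where "U = Min (insert hi B)"
  have finA: "finite A" and finB: "finite B" using fin unfolding A_def B_def by auto
  have AB: "a < b" if "a \<in> insert lo A" "b \<in> insert hi B" for a b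
  proof -
    { fix x y assume x: "x \<in> dom r" "x < v" and y: "y \<in> dom r" "v < y"
      have "the (r x) < the (r y)" using pi x y unfolding partial_iso_def by auto }
    then show ?thesis using that lohi lo hi unfolding A_def B_def by auto
  qed
  have LU: "L < U" unfolding L_def U_def using AB finA finB
    by (metis Max_in Min_in finite_insert insert_not_empty)
  define z where "z = (L + U) / 2"
  have zL: "L < z" and zU: "z < U" using LU unfolding z_def by (auto simp: field_simps)
  have loL: "lo \<le> L" unfolding L_def using finA by simp
  have Uhi: "U \<le> hi" unfolding U_def using finB by simp
  have below: "the (r x) < z" if "x \<in> dom r" "x < v" for x
  proof -
    have "the (r x) \<in> A" using that unfolding A_def by auto
    then have "the (r x) \<le> L" unfolding L_def using finA by simp
    then show ?thesis using zL by simp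
  qed
  have above: "z < the (r x)" if "x \<in> dom r" "v < x" for x
  proof -
    have "the (r x) \<in> B" using that unfolding B_def by auto
    then have "U \<le> the (r x)" unfolding U_def using finB by simp
    then show ?thesis using zU by simp
  qed
  let ?r = "r(v \<mapsto> z)"
  have pi': "partial_iso ?r" unfolding partial_iso_def
  proof (intro conjI ballI impI)
    show "finite (dom ?r)" using fin by simp
    fix x y assume x: "x \<in> dom ?r" and y: "y \<in> dom ?r" and xy: "x < y"
    show "the (?r x) < the (?r y)"
    proof (cases "x = v")
      case True
      then have "y \<noteq> v" "y \<in> dom r" using xy y by auto
      then show ?thesis using above True xy by auto
    next
      case False
      then have xd: "x \<in> dom r" using x by auto
      show ?thesis
      proof (cases "y = v")
        case True then show ?thesis using below False xd xy by auto
      next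
        case False
        then have "y \<in> dom r" using y by auto
        then show ?thesis using xd xy \<open>x \<noteq> v\<close> False pi unfolding partial_iso_def by auto
      qed
    qed
  qed
  have vr: "hd xs \<le> v \<and> v \<le> last xs"
    using nth_in_hd_last[OF sxs, of i] nth_in_hd_last[OF sxs, of "i+1"] i by auto
  have "dom r \<subseteq> {hd xs..last xs}" using g unfolding good_def by simp
  then have domr': "dom ?r \<subseteq> {hd xs..last xs}" using vr by auto
  have xsv: "x \<noteq> v" if "x \<in> set xs" for x using good_fix[OF g that] v by auto
  have fix': "\<forall>x\<in>set xs. ?r x = Some x" using good_fix[OF g] xsv by auto
  have int': "if d j then increasing_interval ?r (xs!j) (xs!(j+1))
              else decreasing_interval ?r (xs!j) (xs!(j+1))" if j: "j + 1 < length xs" for j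
  proof -
    have ends: "?r (xs!j) = Some (xs!j)" "?r (xs!(j+1)) = Some (xs!(j+1))"
      using fix' j by auto
    have old: "if d j then increasing_interval r (xs!j) (xs!(j+1))
              else decreasing_interval r (xs!j) (xs!(j+1))" using g j unfolding good_def by auto
    have vcase: "j = i" if "xs!j < v" "v < xs!(j+1)"
      using interval_unique[OF sxs j i(1) that i(2,3)] .
    show ?thesis
    proof (cases "d j")
      case True
      have "c < the (?r c)" if c: "c \<in> dom ?r \<inter> {xs!j<..<xs!(j+1)}" for c
      proof (cases "c = v")
        case True
        then have "j = i" using vcase c by auto
        then have "v \<le> lo" using dl \<open>d j\<close> by simp
        then show ?thesis using True zL loL by simp
      next
        case False
        then have "c \<in> dom r \<inter> {xs!j<..<xs!(j+1)}" using c by auto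
        then show ?thesis using old \<open>d j\<close> False unfolding increasing_interval_def by auto
      qed
      then show ?thesis using True ends unfolding increasing_interval_def by auto
    next
      case False
      have "the (?r c) < c" if c: "c \<in> dom ?r \<inter> {xs!j<..<xs!(j+1)}" for c
      proof (cases "c = v")
        case True
        then have "j = i" using vcase c by auto
        then have "hi \<le> v" using dh \<open>\<not> d j\<close> by simp
        then show ?thesis using True zU Uhi by simp
      next
        case False
        then have "c \<in> dom r \<inter> {xs!j<..<xs!(j+1)}" using c by auto
        then show ?thesis using old \<open>\<not> d j\<close> False unfolding decreasing_interval_def by auto
      qed
      then show ?thesis using False ends unfolding decreasing_interval_def by auto
    qed
  qed
  have "good ?r xs d" unfolding good_def using pi' sxs ne domr' fix' int' by blast
  moreover have "lo < z" "z < hi" using loL zL zU Uhi by auto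
  ultimately show ?thesis by blast
qed



lemma incr_above:
  assumes g: "good r xs d" and di: "d i" and i: "i+1 < length xs" "xs!i < x"
    and rx: "r x = Some yx" and t: "t \<le> x" "t < xs!(i+1)"
  shows "t < yx"
proof (cases "x < xs!(i+1)")
  case True
  have inc: "increasing_interval r (xs!i) (xs!(i+1))" using g di i unfolding good_def by auto
  have "x \<in> dom r \<inter> {xs!i<..<xs!(i+1)}" using True i rx by auto
  then have "x < the (r x)" using inc unfolding increasing_interval_def by blast
  then show ?thesis using rx t by simp
next
  case False
  have "r (xs!(i+1)) = Some (xs!(i+1))" using good_fix[OF g] i by simp
  then have "xs!(i+1) \<le> yx" using pi_le[OF good_pi[OF g] _ rx] False by simp
  then show ?thesis using t by simp
qed

lemma decr_below:
  assumes g: "good r xs d" and di: "\<not> d i" and i: "i+1 < length xs" "x < xs!(i+1)"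
    and rx: "r x = Some yx" and t: "x \<le> t" "xs!i < t"
  shows "yx < t"
proof (cases "xs!i < x")
  case True
  have inc: "decreasing_interval r (xs!i) (xs!(i+1))" using g di i unfolding good_def by auto
  have "x \<in> dom r \<inter> {xs!i<..<xs!(i+1)}" using True i rx by auto
  then have "the (r x) < x" using inc unfolding decreasing_interval_def by blast
  then show ?thesis using rx t by simp
next
  case False
  have "r (xs!i) = Some (xs!i)" using good_fix[OF g] i by simp
  then have "yx \<le> xs!i" using pi_le[OF good_pi[OF g] rx] False by simp
  then show ?thesis using t by simp
qed

lemma core_incr:
  assumes g: "good r xs d" and di: "d i" and i: "i+1 < length xs" "xs!i < y" "y < xs!(i+1)"
    and t: "y \<le> t" "t < xs!(i+1)" "\<forall>x\<in>dom r \<union> ran r. y < x \<longrightarrow> t \<le> x"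
  shows "\<exists>r' y'. good r' xs d \<and> r \<subseteq>\<^sub>m r' \<and> r' y = Some y' \<and> y < y' \<and> y' < xs!(i+1) \<and>
     dom r' \<union> ran r' \<subseteq> dom r \<union> ran r \<union> {y,y'} \<and> (y' \<in> dom r \<union> ran r \<or> t < y')"
proof (cases "y \<in> dom r")
  case True
  then obtain y' where ry: "r y = Some y'" by auto
  have inc: "increasing_interval r (xs!i) (xs!(i+1))" using g di i unfolding good_def by auto
  have "y \<in> dom r \<inter> {xs!i<..<xs!(i+1)}" using True i by auto
  then have "y < y'" using inc ry unfolding increasing_interval_def by force
  moreover have "y' < xs!(i+1)"
    using pi_lt[OF good_pi[OF g] ry good_fix[OF g, of "xs!(i+1)"]] i by simp
  moreover have "y' \<in> ran r" using ry by (auto simp: ran_def)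
  ultimately show ?thesis using ry g map_le_refl[of r] by (intro exI[of _ r] exI[of _ y']) auto
next
  case False
  have sxs: "sorted_wrt (<) xs" using g unfolding good_def by simp
  have lastb: "xs!(i+1) \<le> last xs" using nth_in_hd_last[OF sxs, of "i+1"] i by simp
  have lo: "\<forall>x\<in>dom r. y < x \<longrightarrow> t < the (r x)"
  proof (intro ballI impI)
    fix x assume x: "x \<in> dom r" "y < x"
    then obtain yx where rx: "r x = Some yx" by auto
    have "t \<le> x" using t(3) x by auto
    then show "t < the (r x)" using incr_above[OF g di i(1) _ rx _ t(2)] x i rx by simp
  qed
  have hi: "\<forall>x\<in>dom r. x < y \<longrightarrow> the (r x) < last xs + 1"
    using good_ran[OF g] by fastforce
  obtain z where z: "t < z" "z < last xs + 1" "good (r(y \<mapsto> z)) xs d"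
    using ext_gen[OF g i False, of t "last xs + 1"] lo hi t lastb di by auto
  have m: "r \<subseteq>\<^sub>m r(y \<mapsto> z)" using False by (auto simp: map_le_def)
  have "z < xs!(i+1)"
    using pi_lt[OF good_pi[OF z(3)], of y z "xs!(i+1)" "xs!(i+1)"] good_fix[OF z(3), of "xs!(i+1)"] i by simp
  moreover have "dom (r(y \<mapsto> z)) \<union> ran (r(y \<mapsto> z)) \<subseteq> dom r \<union> ran r \<union> {y,z}"
    using False by (auto simp: ran_map_upd domIff)
  ultimately show ?thesis using z m t(1) by (intro exI[of _ "r(y \<mapsto> z)"] exI[of _ z]) auto
qed

lemma core:
  assumes g: "good r xs d" and i: "i+1 < length xs" "xs!i < y" "y < xs!(i+1)"
    and t: "y \<le> t" "t < xs!(i+1)" "\<forall>x\<in>dom r \<union> ran r. y < x \<longrightarrow> t \<le> x"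
  shows "\<exists>r' y'. good r' xs d \<and> r \<subseteq>\<^sub>m r' \<and> (if d i then r' else inv_pm r') y = Some y' \<and>
     y < y' \<and> y' < xs!(i+1) \<and>
     dom r' \<union> ran r' \<subseteq> dom r \<union> ran r \<union> {y,y'} \<and> (y' \<in> dom r \<union> ran r \<or> t < y')"
proof (cases "d i")
  case True
  then show ?thesis using core_incr[OF g True i t] by simp
next
  case False
  have pi: "partial_iso r" using good_pi[OF g] .
  have g2: "good (inv_pm r) xs (\<lambda>i. \<not> d i)" using good_inv[OF g] .
  have du: "dom (inv_pm r) \<union> ran (inv_pm r) = dom r \<union> ran r"
    using dom_inv_pm ran_inv_pm[OF pi] by auto
  obtain r' y' where r': "good r' xs (\<lambda>i. \<not> d i)" "inv_pm r \<subseteq>\<^sub>m r'" "r' y = Some y'"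
    "y < y'" "y' < xs!(i+1)" "dom r' \<union> ran r' \<subseteq> dom r \<union> ran r \<union> {y,y'}"
    "y' \<in> dom r \<union> ran r \<or> t < y'"
    using core_incr[OF g2 _ i t(1,2)] False t(3) du by auto
  have pi': "partial_iso r'" using good_pi[OF r'(1)] .
  have g': "good (inv_pm r') xs d" using good_inv[OF r'(1)] by simp
  have "inv_pm (inv_pm r) \<subseteq>\<^sub>m inv_pm r'" using inv_pm_mono[OF r'(2) pi_inv[OF pi] pi'] .
  then have m: "r \<subseteq>\<^sub>m inv_pm r'" using inv_inv_pm[OF pi] by simp
  have e: "inv_pm (inv_pm r') = r'" using inv_inv_pm[OF pi'] .
  have "dom (inv_pm r') \<union> ran (inv_pm r') = dom r' \<union> ran r'"
    using dom_inv_pm ran_inv_pm[OF pi'] by auto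
  then show ?thesis using g' m e r' False by (intro exI[of _ "inv_pm r'"] exI[of _ y']) auto
qed

lemma cover1:
  assumes g: "good r xs d" and v: "hd xs \<le> v" "v \<le> last xs"
  shows "\<exists>r'. good r' xs d \<and> r \<subseteq>\<^sub>m r' \<and> v \<in> dom r'"
proof (cases "v \<in> dom r")
  case True then show ?thesis using g map_le_refl by blast
next
  case False
  have sxs: "sorted_wrt (<) xs" and ne: "xs \<noteq> []" using g unfolding good_def by auto
  have nv: "v \<notin> set xs" using False good_fix[OF g] by auto
  have "v \<noteq> hd xs" "v \<noteq> last xs" using nv ne by auto
  then obtain i where i: "i + 1 < length xs" "xs!i < v" "v < xs!(i+1)"
    using find_interval[OF ne sxs _ _ nv] v by force
  have hdb: "hd xs \<le> xs!i" using nth_in_hd_last[OF sxs, of i] i by simp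
  have lastb: "xs!(i+1) \<le> last xs" using nth_in_hd_last[OF sxs, of "i+1"] i by simp
  show ?thesis
  proof (cases "d i")
    case True
    have lo: "\<forall>x\<in>dom r. v < x \<longrightarrow> v < the (r x)"
    proof (intro ballI impI)
      fix x assume x: "x \<in> dom r" "v < x"
      then obtain yx where rx: "r x = Some yx" by auto
      then show "v < the (r x)" using incr_above[OF g True i(1) _ rx _ i(3)] x i by simp
    qed
    have hi: "\<forall>x\<in>dom r. x < v \<longrightarrow> the (r x) < last xs + 1"
      using good_ran[OF g] by fastforce
    obtain z where "good (r(v \<mapsto> z)) xs d"
      using ext_gen[OF g i False, of v "last xs + 1"] lo hi True v by auto
    moreover have "r \<subseteq>\<^sub>m r(v \<mapsto> z)" using False by (auto simp: map_le_def)
    ultimately show ?thesis by auto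
  next
    case F: False
    have hi: "\<forall>x\<in>dom r. x < v \<longrightarrow> the (r x) < v"
    proof (intro ballI impI)
      fix x assume x: "x \<in> dom r" "x < v"
      then obtain yx where rx: "r x = Some yx" by auto
      then show "the (r x) < v" using decr_below[OF g F i(1) _ rx _ i(2)] x i by simp
    qed
    have lo: "\<forall>x\<in>dom r. v < x \<longrightarrow> hd xs - 1 < the (r x)"
      using good_ran[OF g] by fastforce
    obtain z where "good (r(v \<mapsto> z)) xs d"
      using ext_gen[OF g i False, of "hd xs - 1" v] lo hi F v by auto
    moreover have "r \<subseteq>\<^sub>m r(v \<mapsto> z)" using False by (auto simp: map_le_def)
    ultimately show ?thesis by auto
  qed
qed

lemma cover_set:
  assumes "finite C"
  shows "good r xs d \<Longrightarrow> C \<subseteq> {hd xs..last xs} \<Longrightarrow> \<exists>r'. good r' xs d \<and> r \<subseteq>\<^sub>m r' \<and> C \<subseteq> dom r'"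
  using assms
proof (induction C arbitrary: r rule: finite_induct)
  case empty then show ?case using map_le_refl by blast
next
  case (insert c C)
  have "C \<subseteq> {hd xs..last xs}" using insert.prems by auto
  then obtain r1 where r1: "good r1 xs d" "r \<subseteq>\<^sub>m r1" "C \<subseteq> dom r1" using insert.IH insert.prems(1) by blast
  obtain r2 where r2: "good r2 xs d" "r1 \<subseteq>\<^sub>m r2" "c \<in> dom r2" proof -
    have "hd xs \<le> c" "c \<le> last xs" using insert.prems by auto
    then show ?thesis using cover1[OF r1(1), of c] that by blast
  qed
  have "dom r1 \<subseteq> dom r2" using r2(2) map_le_implies_dom_le by blast
  then have "insert c C \<subseteq> dom r2" using r1(3) r2(3) by blast
  moreover have "r \<subseteq>\<^sub>m r2" using map_le_trans[OF r1(2) r2(2)] .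
  ultimately show ?case using r2(1) by blast
qed



fun mp :: "(rat \<rightharpoonup> rat) \<Rightarrow> (rat \<rightharpoonup> rat) \<Rightarrow> gen \<Rightarrow> (rat \<rightharpoonup> rat)" where
  "mp p q S = p" | "mp p q T = q"

lemma act_eq: "act p q (G, b) = (if b then mp p q G else inv_pm (mp p q G))"
  by (cases G; cases b) auto

lemma act_pi: "partial_iso p \<Longrightarrow> partial_iso q \<Longrightarrow> partial_iso (act p q l)"
  by (cases l, rename_tac G b, case_tac G; case_tac b) (auto intro: pi_inv)

lemma act_mono:
  assumes "p \<subseteq>\<^sub>m p'" "q \<subseteq>\<^sub>m q'" "partial_iso p" "partial_iso q" "partial_iso p'" "partial_iso q'"
  shows "act p q l \<subseteq>\<^sub>m act p' q' l"
  using assms inv_pm_mono by (cases l, rename_tac G b, case_tac G; case_tac b) auto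

lemma word_eval_mono:
  assumes "p \<subseteq>\<^sub>m p'" "q \<subseteq>\<^sub>m q'" "partial_iso p" "partial_iso q" "partial_iso p'" "partial_iso q'"
  shows "word_eval p q w c = Some d \<Longrightarrow> word_eval p' q' w c = Some d"
proof (induction w arbitrary: d)
  case Nil then show ?case by simp
next
  case (Cons l w)
  then obtain d0 where d0: "word_eval p q w c = Some d0" "act p q l d0 = Some d"
    by (auto split: option.splits)
  have "act p' q' l d0 = Some d" using act_mono[OF assms, of l] d0(2) by (metis domI map_le_def)
  then show ?case using Cons.IH[OF d0(1)] by simp
qed

lemma word_eval_append:
  "word_eval p q (v @ u) c = (case word_eval p q u c of None \<Rightarrow> None | Some d \<Rightarrow> word_eval p q v d)"
  by (induction v) (auto split: option.splits)

fun inc :: "(rat \<rightharpoonup> rat) \<Rightarrow> (rat \<rightharpoonup> rat) \<Rightarrow> word \<Rightarrow> rat \<Rightarrow> bool" where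
  "inc p q [] c = True"
| "inc p q (l # w) c = (inc p q w c \<and> (\<exists>d e. word_eval p q w c = Some d \<and> act p q l d = Some e \<and> d < e))"

lemma inc_mono:
  assumes "p \<subseteq>\<^sub>m p'" "q \<subseteq>\<^sub>m q'" "partial_iso p" "partial_iso q" "partial_iso p'" "partial_iso q'"
  shows "inc p q w c \<Longrightarrow> inc p' q' w c"
proof (induction w)
  case Nil then show ?case by simp
next
  case (Cons l w)
  then obtain d e where de: "word_eval p q w c = Some d" "act p q l d = Some e" "d < e" by auto
  have "act p' q' l d = Some e" using act_mono[OF assms, of l] de(2) by (metis domI map_le_def)
  then show ?case using Cons word_eval_mono[OF assms de(1)] de(3) by auto
qed

lemma word_eval_strict:
  assumes "partial_iso p" "partial_iso q"
  shows "word_eval p q w c = Some x \<Longrightarrow> word_eval p q w c' = Some x' \<Longrightarrow> c < c' \<Longrightarrow> x < x'"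
proof (induction w arbitrary: x x')
  case Nil then show ?case by simp
next
  case (Cons l w)
  then obtain d d' where "word_eval p q w c = Some d" "act p q l d = Some x"
    "word_eval p q w c' = Some d'" "act p q l d' = Some x'"
    by (auto split: option.splits)
  then show ?case using Cons.IH pi_lt[OF act_pi[OF assms, of l]] Cons.prems(3) by blast
qed

lemma act_open:
  assumes gp: "good p xsp dp" and gq: "good q xsq dq" and e: "hd xsq = hd xsp" "last xsq = last xsp"
  shows "act p q l x = Some y \<Longrightarrow> hd xsp < x \<Longrightarrow> x < last xsp \<Longrightarrow> hd xsp < y \<and> y < last xsp"
  using good_open[OF gp] good_open[OF gq] good_open[OF good_inv[OF gp]] good_open[OF good_inv[OF gq]] e
  by (cases l, rename_tac G b, case_tac G; case_tac b) auto

lemma word_open: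
  assumes gp: "good p xsp dp" and gq: "good q xsq dq" and e: "hd xsq = hd xsp" "last xsq = last xsp"
  shows "word_eval p q w x = Some y \<Longrightarrow> hd xsp < x \<Longrightarrow> x < last xsp \<Longrightarrow> hd xsp < y \<and> y < last xsp"
proof (induction w arbitrary: y)
  case Nil then show ?case by simp
next
  case (Cons l w)
  then obtain d where "word_eval p q w x = Some d" "act p q l d = Some y"
    by (auto split: option.splits)
  then show ?case using Cons act_open[OF gp gq e] by blast
qed

lemma reduced_Cons:
  "reduced (a # w) \<longleftrightarrow> (w \<noteq> [] \<longrightarrow> \<not> (fst a = fst (hd w) \<and> snd a \<noteq> snd (hd w))) \<and> reduced w"
proof
  assume r: "reduced (a # w)"
  have 1: "w \<noteq> [] \<longrightarrow> \<not> (fst a = fst (hd w) \<and> snd a \<noteq> snd (hd w))"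
    using r[unfolded reduced_def, rule_format, of 0] by (auto simp: hd_conv_nth)
  have "reduced w" unfolding reduced_def
  proof (intro allI impI)
    fix i assume "i + 1 < length w"
    then show "\<not> (fst (w ! i) = fst (w ! (i + 1)) \<and> snd (w ! i) \<noteq> snd (w ! (i + 1)))"
      using r[unfolded reduced_def, rule_format, of "Suc i"] by simp
  qed
  then show "(w \<noteq> [] \<longrightarrow> \<not> (fst a = fst (hd w) \<and> snd a \<noteq> snd (hd w))) \<and> reduced w" using 1 by simp
next
  assume h: "(w \<noteq> [] \<longrightarrow> \<not> (fst a = fst (hd w) \<and> snd a \<noteq> snd (hd w))) \<and> reduced w"
  show "reduced (a # w)" unfolding reduced_def
  proof (intro allI impI)
    fix i assume i: "i + 1 < length (a # w)"
    show "\<not> (fst ((a # w) ! i) = fst ((a # w) ! (i + 1)) \<and> snd ((a # w) ! i) \<noteq> snd ((a # w) ! (i + 1)))"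
    proof (cases i)
      case 0
      then show ?thesis using h i by (auto simp: hd_conv_nth)
    next
      case (Suc j)
      then show ?thesis using h i unfolding reduced_def by auto
    qed
  qed
qed

lemma inc_reduced:
  assumes pi: "partial_iso p" "partial_iso q"
  shows "inc p q w c \<Longrightarrow> reduced w"
proof (induction w)
  case Nil then show ?case by (simp add: reduced_def)
next
  case (Cons l w)
  have rw: "reduced w" using Cons by simp
  show ?case
  proof (cases w)
    case Nil then show ?thesis by (simp add: reduced_def)
  next
    case (Cons l2 w')
    from \<open>inc p q (l # w) c\<close> Cons obtain d0 d e where
      d0: "word_eval p q w' c = Some d0" "act p q l2 d0 = Some d" "d0 < d"
      and de: "act p q l d = Some e" "d < e"
      by (auto split: option.splits)
    obtain G b where l: "l = (G, b)" by (cases l)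
    obtain G2 b2 where l2: "l2 = (G2, b2)" by (cases l2)
    have pm: "partial_iso (mp p q G)" using pi by (cases G) auto
    have "\<not> (G = G2 \<and> b \<noteq> b2)"
    proof
      assume h: "G = G2 \<and> b \<noteq> b2"
      then have "act p q l d = Some d0" using d0(2) l l2 inv_pm_Some[OF pm] by (auto simp: act_eq)
      then show False using de d0 by simp
    qed
    then show ?thesis using rw Cons l l2 by (simp add: reduced_Cons)
  qed
qed



definition Dp :: "(rat \<rightharpoonup> rat) \<Rightarrow> (rat \<rightharpoonup> rat) \<Rightarrow> rat set" where
  "Dp p q = dom p \<union> ran p \<union> dom q \<union> ran q"

lemma finite_Dp: "partial_iso p \<Longrightarrow> partial_iso q \<Longrightarrow> finite (Dp p q)"
  unfolding Dp_def using finite_ran_pi by (auto simp: partial_iso_def)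

lemma cover_act:
  assumes g: "good m xs d" and C: "finite C" "C \<subseteq> {hd xs..last xs}"
  shows "\<exists>m'. good m' xs d \<and> m \<subseteq>\<^sub>m m' \<and> C \<subseteq> dom (if b then m' else inv_pm m')"
proof (cases b)
  case True then show ?thesis using cover_set[OF C(1) g C(2)] by simp
next
  case False
  have pi: "partial_iso m" using good_pi[OF g] .
  obtain r where r: "good r xs (\<lambda>i. \<not> d i)" "inv_pm m \<subseteq>\<^sub>m r" "C \<subseteq> dom r"
    using cover_set[OF C(1) good_inv[OF g] C(2)] by blast
  have pr: "partial_iso r" using good_pi[OF r(1)] .
  have "inv_pm (inv_pm m) \<subseteq>\<^sub>m inv_pm r" using inv_pm_mono[OF r(2) pi_inv[OF pi] pr] .
  then have "m \<subseteq>\<^sub>m inv_pm r" using inv_inv_pm[OF pi] by simp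
  moreover have "good (inv_pm r) xs d" using good_inv[OF r(1)] by simp
  ultimately show ?thesis using False r(3) inv_inv_pm[OF pr] by (intro exI[of _ "inv_pm r"]) simp
qed

lemma pair_cover:
  assumes gp: "good p xsp dp" and gq: "good q xsq dq" and e: "hd xsq = hd xsp" "last xsq = last xsp"
    and C: "finite C" "C \<subseteq> {hd xsp..last xsp}"
  shows "\<exists>p' q'. good p' xsp dp \<and> good q' xsq dq \<and> p \<subseteq>\<^sub>m p' \<and> q \<subseteq>\<^sub>m q' \<and>
           C \<subseteq> dom (act p' q' l) \<and> (fst l = T \<longrightarrow> p' = p)"
proof -
  obtain G b where l: "l = (G, b)" by (cases l)
  show ?thesis
  proof (cases G)
    case S
    obtain m' where "good m' xsp dp" "p \<subseteq>\<^sub>m m'" "C \<subseteq> dom (if b then m' else inv_pm m')"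
      using cover_act[OF gp C] by blast
    then show ?thesis using gq l S map_le_refl[of q]
      by (rule_tac exI[of _ m'], rule_tac exI[of _ q]) (cases b, simp_all add: act_eq)
  next
    case T
    obtain m' where "good m' xsq dq" "q \<subseteq>\<^sub>m m'" "C \<subseteq> dom (if b then m' else inv_pm m')"
      using cover_act[OF gq] C e by (metis)
    then show ?thesis using gp l T map_le_refl[of p]
      by (rule_tac exI[of _ p], rule_tac exI[of _ m']) (cases b, simp_all add: act_eq)
  qed
qed

lemma good_trans:
  assumes "good p xsp dp" "good q xsq dq" "good p' xsp dp" "good q' xsq dq"
    "p \<subseteq>\<^sub>m p'" "q \<subseteq>\<^sub>m q'"
  shows "word_eval p q w c = Some d \<Longrightarrow> word_eval p' q' w c = Some d"
    and "inc p q w c \<Longrightarrow> inc p' q' w c"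
  using word_eval_mono[OF assms(5,6) good_pi[OF assms(1)] good_pi[OF assms(2)] good_pi[OF assms(3)] good_pi[OF assms(4)]]
    inc_mono[OF assms(5,6) good_pi[OF assms(1)] good_pi[OF assms(2)] good_pi[OF assms(3)] good_pi[OF assms(4)]]
  by auto

lemma define_all:
  assumes e: "hd xsq = hd xsp" "last xsq = last xsp" and C: "finite C" "C \<subseteq> {hd xsp<..<last xsp}"
  shows "good p xsp dp \<Longrightarrow> good q xsq dq \<Longrightarrow> \<exists>p' q'. good p' xsp dp \<and> good q' xsq dq \<and> p \<subseteq>\<^sub>m p' \<and> q \<subseteq>\<^sub>m q' \<and>
     (\<forall>c\<in>C. word_eval p' q' w c \<noteq> None) \<and> ((\<forall>l\<in>set w. fst l = T) \<longrightarrow> p' = p)"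
proof (induction w arbitrary: p q)
  case Nil then show ?case using map_le_refl by fastforce
next
  case (Cons l w)
  obtain p1 q1 where 1: "good p1 xsp dp" "good q1 xsq dq" "p \<subseteq>\<^sub>m p1" "q \<subseteq>\<^sub>m q1"
     "\<forall>c\<in>C. word_eval p1 q1 w c \<noteq> None" "(\<forall>l\<in>set w. fst l = T) \<longrightarrow> p1 = p"
    using Cons.IH[OF Cons.prems] by blast
  define C' where "C' = (\<lambda>c. the (word_eval p1 q1 w c)) ` C"
  have C'f: "finite C'" using C(1) unfolding C'_def by simp
  have C's: "C' \<subseteq> {hd xsp..last xsp}"
  proof
    fix y assume "y \<in> C'"
    then obtain c where c: "c \<in> C" "y = the (word_eval p1 q1 w c)" unfolding C'_def by auto
    then have "word_eval p1 q1 w c = Some y" using 1(5) by auto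
    then show "y \<in> {hd xsp..last xsp}" using word_open[OF 1(1,2) e] c C(2) by fastforce
  qed
  obtain p2 q2 where 2: "good p2 xsp dp" "good q2 xsq dq" "p1 \<subseteq>\<^sub>m p2" "q1 \<subseteq>\<^sub>m q2"
    "C' \<subseteq> dom (act p2 q2 l)" "fst l = T \<longrightarrow> p2 = p1"
    using pair_cover[OF 1(1,2) e C'f C's, of l] by blast
  have def: "word_eval p2 q2 (l # w) c \<noteq> None" if c: "c \<in> C" for c
  proof -
    obtain y where y: "word_eval p1 q1 w c = Some y" using 1(5) c by auto
    then have y2: "word_eval p2 q2 w c = Some y" using good_trans(1)[OF 1(1,2) 2(1,2,3,4)] by blast
    have "y \<in> C'" using y c unfolding C'_def by force
    then have "act p2 q2 l y \<noteq> None" using 2(5) by auto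
    then show ?thesis using y2 by simp
  qed
  show ?case using 1 2 def map_le_trans by (rule_tac exI[of _ p2], rule_tac exI[of _ q2]) auto
qed

lemma gstep:
  assumes gp: "good p xsp dp" and gq: "good q xsq dq"
    and G: "(G = S \<and> xs = xsp \<and> dd = dp) \<or> (G = T \<and> xs = xsq \<and> dd = dq)"
    and i: "i+1 < length xs" "xs!i < y" "y < xs!(i+1)"
    and ev: "word_eval p q w e0 = Some y" and inc: "inc p q w e0"
    and t: "y \<le> t" "t < xs!(i+1)" "\<forall>x\<in>Dp p q. y < x \<longrightarrow> t \<le> x"
  shows "\<exists>p' q' y'. good p' xsp dp \<and> good q' xsq dq \<and> p \<subseteq>\<^sub>m p' \<and> q \<subseteq>\<^sub>m q' \<and> (G = T \<longrightarrow> p' = p) \<and>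
     word_eval p' q' ((G, dd i) # w) e0 = Some y' \<and> inc p' q' ((G, dd i) # w) e0 \<and> y < y' \<and>
     y' < xs!(i+1) \<and> Dp p' q' \<subseteq> Dp p q \<union> {y, y'} \<and> (y' \<in> Dp p q \<or> t < y')"
  using G
proof
  assume G: "G = S \<and> xs = xsp \<and> dd = dp"
  have t3: "\<forall>x\<in>dom p \<union> ran p. y < x \<longrightarrow> t \<le> x" using t(3) unfolding Dp_def by auto
  obtain r' y' where r': "good r' xsp dp" "p \<subseteq>\<^sub>m r'" "(if dp i then r' else inv_pm r') y = Some y'"
     "y < y'" "y' < xsp!(i+1)" "dom r' \<union> ran r' \<subseteq> dom p \<union> ran p \<union> {y,y'}"
     "y' \<in> dom p \<union> ran p \<or> t < y'"
    using core[OF gp _ _ _ t(1) _ t3, of i] G i t(2) by auto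
  have ev': "word_eval r' q w e0 = Some y" and inc': "inc r' q w e0"
    using good_trans[OF gp gq r'(1) gq r'(2) map_le_refl] ev inc by auto
  have "word_eval r' q ((G, dd i) # w) e0 = Some y'" using ev' r'(3) G by (cases "dd i") (auto simp: act_eq)
  moreover have "inc r' q ((G, dd i) # w) e0" using ev' inc' r'(3,4) G by (cases "dd i") (auto simp: act_eq)
  moreover have "Dp r' q \<subseteq> Dp p q \<union> {y, y'}" using r'(6) unfolding Dp_def by auto
  moreover have "y' \<in> Dp p q \<or> t < y'" using r'(7) unfolding Dp_def by auto
  ultimately show ?thesis using r' gq G map_le_refl[of q]
    by (rule_tac exI[of _ r'], rule_tac exI[of _ q], rule_tac exI[of _ y']) auto
next
  assume G: "G = T \<and> xs = xsq \<and> dd = dq"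
  have t3: "\<forall>x\<in>dom q \<union> ran q. y < x \<longrightarrow> t \<le> x" using t(3) unfolding Dp_def by auto
  obtain r' y' where r': "good r' xsq dq" "q \<subseteq>\<^sub>m r'" "(if dq i then r' else inv_pm r') y = Some y'"
     "y < y'" "y' < xsq!(i+1)" "dom r' \<union> ran r' \<subseteq> dom q \<union> ran q \<union> {y,y'}"
     "y' \<in> dom q \<union> ran q \<or> t < y'"
    using core[OF gq _ _ _ t(1) _ t3, of i] G i t(2) by auto
  have ev': "word_eval p r' w e0 = Some y" and inc': "inc p r' w e0"
    using good_trans[OF gp gq gp r'(1) map_le_refl r'(2)] ev inc by auto
  have "word_eval p r' ((G, dd i) # w) e0 = Some y'" using ev' r'(3) G by (cases "dd i") (auto simp: act_eq)
  moreover have "inc p r' ((G, dd i) # w) e0" using ev' inc' r'(3,4) G by (cases "dd i") (auto simp: act_eq)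
  moreover have "Dp p r' \<subseteq> Dp p q \<union> {y, y'}" using r'(6) unfolding Dp_def by auto
  moreover have "y' \<in> Dp p q \<or> t < y'" using r'(7) unfolding Dp_def by auto
  ultimately show ?thesis using r' gp G map_le_refl[of p]
    by (rule_tac exI[of _ p], rule_tac exI[of _ r'], rule_tac exI[of _ y']) auto
qed



lemma card_step:
  fixes y y' s :: rat
  assumes fin: "finite D" and D': "D' \<subseteq> D \<union> {y,y'}" and yy: "y < y'"
  shows "card {x\<in>D'. y' < x} \<le> card {x\<in>D. y < x}"
    and "s \<in> D \<Longrightarrow> y < s \<Longrightarrow> s \<le> y' \<Longrightarrow> card {x\<in>D'. y' < x} < card {x\<in>D. y < x}"
proof -
  have sub: "{x\<in>D'. y' < x} \<subseteq> {x\<in>D. y < x}"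
  proof
    fix x assume x: "x \<in> {x\<in>D'. y' < x}"
    then have "x \<in> D \<union> {y,y'}" using D' by blast
    then show "x \<in> {x\<in>D. y < x}" using x yy by auto
  qed
  have fin2: "finite {x\<in>D. y < x}" using fin by simp
  show "card {x\<in>D'. y' < x} \<le> card {x\<in>D. y < x}" using card_mono[OF fin2 sub] .
  assume s: "s \<in> D" "y < s" "s \<le> y'"
  have "s \<in> {x\<in>D. y < x}" "s \<notin> {x\<in>D'. y' < x}" using s by auto
  then have "{x\<in>D'. y' < x} \<subset> {x\<in>D. y < x}" using sub by blast
  then show "card {x\<in>D'. y' < x} < card {x\<in>D. y < x}" using psubset_card_mono[OF fin2] by blast
qed

lemma good_xs_dom: "good p xs d \<Longrightarrow> set xs \<subseteq> dom p"
  using good_fix by blast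

lemma climb:
  fixes xsp xsq :: "rat list"
  assumes e: "hd xsq = hd xsp" "last xsq = last xsp"
    and disj: "set xsp \<inter> set xsq \<subseteq> {hd xsp, last xsp}"
    and len: "2 \<le> length xsq"
  shows "good p xsp dp \<Longrightarrow> good q xsq dq \<Longrightarrow> word_eval p q w e0 = Some y \<Longrightarrow> inc p q w e0 \<Longrightarrow>
    hd xsp < y \<Longrightarrow> y < last xsp \<Longrightarrow>
    \<exists>p' q' w' y'. good p' xsp dp \<and> good q' xsq dq \<and> p \<subseteq>\<^sub>m p' \<and> q \<subseteq>\<^sub>m q' \<and>
      word_eval p' q' w' e0 = Some y' \<and> inc p' q' w' e0 \<and> xsq ! (length xsq - 2) < y' \<and> y' < last xsp"
proof (induction "2 * card {x \<in> Dp p q. y < x} + (if y \<in> set xsp \<union> set xsq then 1 else 0)"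
    arbitrary: p q w y rule: less_induct)
  case less
  note gp = less.prems(1) and gq = less.prems(2) and ev = less.prems(3) and inc = less.prems(4)
  let ?m = "hd xsp" let ?M = "last xsp" let ?k = "length xsq - 2"
  have sp: "sorted_wrt (<) xsp" and sq: "sorted_wrt (<) xsq" and nep: "xsp \<noteq> []" and neq: "xsq \<noteq> []"
    using gp gq unfolding good_def by auto
  have fin: "finite (Dp p q)" using finite_Dp[OF good_pi[OF gp] good_pi[OF gq]] .
  have Fsub: "set xsp \<union> set xsq \<subseteq> Dp p q" using good_xs_dom[OF gp] good_xs_dom[OF gq] unfolding Dp_def by auto
  define c where "c = card {x \<in> Dp p q. y < x}"
  have cont: "\<exists>p' q' w' y'. good p' xsp dp \<and> good q' xsq dq \<and> p \<subseteq>\<^sub>m p' \<and> q \<subseteq>\<^sub>m q' \<and>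
      word_eval p' q' w' e0 = Some y' \<and> inc p' q' w' e0 \<and> xsq ! ?k < y' \<and> y' < ?M"
    if h: "good p1 xsp dp" "good q1 xsq dq" "p \<subseteq>\<^sub>m p1" "q \<subseteq>\<^sub>m q1" "word_eval p1 q1 w1 e0 = Some y1"
      "inc p1 q1 w1 e0" "?m < y1" "y1 < ?M"
      "2 * card {x \<in> Dp p1 q1. y1 < x} + (if y1 \<in> set xsp \<union> set xsq then 1 else 0) <
       2 * card {x \<in> Dp p q. y < x} + (if y \<in> set xsp \<union> set xsq then 1 else 0)"
    for p1 q1 w1 y1
  proof -
    obtain p' q' w' y' where r: "good p' xsp dp" "good q' xsq dq" "p1 \<subseteq>\<^sub>m p'" "q1 \<subseteq>\<^sub>m q'"
      "word_eval p' q' w' e0 = Some y'" "inc p' q' w' e0" "xsq ! ?k < y'" "y' < ?M"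
      using less.hyps[OF h(9) h(1,2,5,6,7,8)] by blast
    then show ?thesis using h(3,4) map_le_trans by blast
  qed
  show ?case
  proof (cases "xsq ! ?k < y")
    case True
    then show ?thesis using gp gq ev inc less.prems(6) map_le_refl by blast
  next
    case notdone: False
    have "Suc (length xsq - 2) = length xsq - Suc 0" using len by arith
    then have lastq: "last xsq = xsq ! (?k + 1)" using len neq by (simp add: last_conv_nth)
    have km: "\<not> (j + 1 < length xsq \<and> xsq!j < y \<and> y < xsq!(j+1) \<and> xsq!(j+1) = ?M)" for j
    proof
      assume h: "j + 1 < length xsq \<and> xsq!j < y \<and> y < xsq!(j+1) \<and> xsq!(j+1) = ?M"
      have "j + 1 = ?k + 1"
      proof (rule ccontr)
        assume "j + 1 \<noteq> ?k + 1"
        then have "j + 1 < ?k + 1" using h len by linarith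
        then have "xsq!(j+1) < xsq!(?k+1)" using sorted_nth_lt[OF sq] len by simp
        then show False using h lastq e by simp
      qed
      then show False using h notdone by simp
    qed
    have ym: "?m < y" "y < ?M" using less.prems by auto
    have Mlast: "xs!(i+1) \<le> ?M" if "xs = xsp \<or> xs = xsq" "i + 1 < length xs" for xs i
      using that nth_in_hd_last[OF sp, of "i+1"] nth_in_hd_last[OF sq, of "i+1"] e by auto
    consider (P) "y \<in> set xsp" | (Q) "y \<in> set xsq" | (N) "y \<notin> set xsp" "y \<notin> set xsq" by blast
    then show ?thesis
    proof cases
      case P
      then have yq: "y \<notin> set xsq" using disj ym by auto
      obtain j where j: "j + 1 < length xsq" "xsq!j < y" "y < xsq!(j+1)"
        using find_interval[OF neq sq _ _ yq] ym e by auto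
      obtain p' q' y' where r: "good p' xsp dp" "good q' xsq dq" "p \<subseteq>\<^sub>m p'" "q \<subseteq>\<^sub>m q'"
        "word_eval p' q' ((T, dq j) # w) e0 = Some y'" "inc p' q' ((T, dq j) # w) e0" "y < y'"
        "y' < xsq!(j+1)" "Dp p' q' \<subseteq> Dp p q \<union> {y, y'}"
        using gstep[OF gp gq _ j ev inc order.refl j(3), of T dq] by fastforce
      have "y' < ?M" using r(8) Mlast[of xsq j] j by auto
      moreover have "2 * card {x \<in> Dp p' q'. y' < x} + (if y' \<in> set xsp \<union> set xsq then 1 else 0) <
       2 * card {x \<in> Dp p q. y < x} + (if y \<in> set xsp \<union> set xsq then 1 else 0)"
      proof (cases "y' \<in> Dp p q")
        case True
        then have "card {x \<in> Dp p' q'. y' < x} < card {x \<in> Dp p q. y < x}"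
          using card_step(2)[OF fin r(9) r(7), of y'] r(7) by simp
        then show ?thesis using P by simp
      next
        case False
        then have "y' \<notin> set xsp \<union> set xsq" using Fsub by auto
        then show ?thesis using card_step(1)[OF fin r(9) r(7)] P by simp
      qed
      ultimately show ?thesis using cont[OF r(1-6)] r(7) ym by simp
    next
      case Q
      then have yp: "y \<notin> set xsp" using disj ym e by auto
      obtain j where j: "j + 1 < length xsp" "xsp!j < y" "y < xsp!(j+1)"
        using find_interval[OF nep sp _ _ yp] ym by auto
      obtain p' q' y' where r: "good p' xsp dp" "good q' xsq dq" "p \<subseteq>\<^sub>m p'" "q \<subseteq>\<^sub>m q'"
        "word_eval p' q' ((S, dp j) # w) e0 = Some y'" "inc p' q' ((S, dp j) # w) e0" "y < y'"
        "y' < xsp!(j+1)" "Dp p' q' \<subseteq> Dp p q \<union> {y, y'}"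
        using gstep[OF gp gq _ j ev inc order.refl j(3), of S dp] by fastforce
      have "y' < ?M" using r(8) Mlast[of xsp j] j by auto
      moreover have "2 * card {x \<in> Dp p' q'. y' < x} + (if y' \<in> set xsp \<union> set xsq then 1 else 0) <
       2 * card {x \<in> Dp p q. y < x} + (if y \<in> set xsp \<union> set xsq then 1 else 0)"
      proof (cases "y' \<in> Dp p q")
        case True
        then have "card {x \<in> Dp p' q'. y' < x} < card {x \<in> Dp p q. y < x}"
          using card_step(2)[OF fin r(9) r(7), of y'] r(7) by simp
        then show ?thesis using Q by simp
      next
        case False
        then have "y' \<notin> set xsp \<union> set xsq" using Fsub by auto
        then show ?thesis using card_step(1)[OF fin r(9) r(7)] Q by simp
      qed
      ultimately show ?thesis using cont[OF r(1-6)] r(7) ym by simp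
    next
      case N
      obtain i where i: "i + 1 < length xsp" "xsp!i < y" "y < xsp!(i+1)"
        using find_interval[OF nep sp _ _ N(1)] ym by auto
      obtain j where j: "j + 1 < length xsq" "xsq!j < y" "y < xsq!(j+1)"
        using find_interval[OF neq sq _ _ N(2)] ym e by auto
      define U where "U = {x \<in> Dp p q. y < x}"
      have Uf: "finite U" using fin unfolding U_def by simp
      have bi: "xsp!(i+1) \<in> U" using i Fsub nth_mem[of "i+1" xsp] unfolding U_def by auto
      have bj: "xsq!(j+1) \<in> U" using j Fsub nth_mem[of "j+1" xsq] unfolding U_def by auto
      define s where "s = Min U"
      have sU: "s \<in> U" using Uf bi unfolding s_def by (metis Min_in empty_iff)
      have sle: "s \<le> x" if "x \<in> U" for x using Uf that unfolding s_def by simp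
      have ts: "\<forall>x\<in>Dp p q. y < x \<longrightarrow> s \<le> x" using sle unfolding U_def by auto
      have ys: "y \<le> s" "y < s" "s \<in> Dp p q" using sU unfolding U_def by auto
      have after: "2 * card {x \<in> Dp p' q'. y' < x} + (if y' \<in> set xsp \<union> set xsq then 1 else 0) <
       2 * card {x \<in> Dp p q. y < x} + (if y \<in> set xsp \<union> set xsq then 1 else 0)"
        if "Dp p' q' \<subseteq> Dp p q \<union> {y, y'}" "y < y'" "y' \<in> Dp p q \<or> s < y'" for p' q' y'
      proof -
        have "s \<le> y'" using that(3) ts that(2) by auto
        then have "card {x \<in> Dp p' q'. y' < x} < card {x \<in> Dp p q. y < x}"
          using card_step(2)[OF fin that(1,2) ys(3) ys(2)] by simp
        then show ?thesis using N by simp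
      qed
      have sbi: "s \<le> xsp!(i+1)" and sbj: "s \<le> xsq!(j+1)" using sle bi bj by auto
      show ?thesis
      proof (cases "s < xsp!(i+1)")
        case True
        obtain p' q' y' where r: "good p' xsp dp" "good q' xsq dq" "p \<subseteq>\<^sub>m p'" "q \<subseteq>\<^sub>m q'"
          "word_eval p' q' ((S, dp i) # w) e0 = Some y'" "inc p' q' ((S, dp i) # w) e0" "y < y'"
          "y' < xsp!(i+1)" "Dp p' q' \<subseteq> Dp p q \<union> {y, y'}" "y' \<in> Dp p q \<or> s < y'"
          using gstep[OF gp gq _ i ev inc ys(1) True ts, of S dp] by fastforce
        have "y' < ?M" using r(8) Mlast[of xsp i] i by auto
        then show ?thesis using cont[OF r(1-6)] r(7) ym after[OF r(9,7,10)] by simp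
      next
        case F1: False
        show ?thesis
        proof (cases "s < xsq!(j+1)")
          case True
          obtain p' q' y' where r: "good p' xsp dp" "good q' xsq dq" "p \<subseteq>\<^sub>m p'" "q \<subseteq>\<^sub>m q'"
            "word_eval p' q' ((T, dq j) # w) e0 = Some y'" "inc p' q' ((T, dq j) # w) e0" "y < y'"
            "y' < xsq!(j+1)" "Dp p' q' \<subseteq> Dp p q \<union> {y, y'}" "y' \<in> Dp p q \<or> s < y'"
            using gstep[OF gp gq _ j ev inc ys(1) True ts, of T dq] by fastforce
          have "y' < ?M" using r(8) Mlast[of xsq j] j by auto
          then show ?thesis using cont[OF r(1-6)] r(7) ym after[OF r(9,7,10)] by simp
        next
          case False
          then have eq: "s = xsp!(i+1)" "s = xsq!(j+1)" using sbi sbj F1 by auto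
          have "xsp!(i+1) \<in> set xsp" "xsq!(j+1) \<in> set xsq" using i(1) j(1) by simp_all
          then have "s \<in> set xsp \<inter> set xsq" using eq by simp
          then have "s = ?M" using disj ys ym by auto
          then show ?thesis using km[of j] j eq by simp
        qed
      qed
    qed
  qed
qed



lemma push:
  fixes xsp xsq :: "rat list"
  assumes gp: "good p xsp dp" and len: "2 \<le> length xsq"
  shows "good q xsq dq \<Longrightarrow> word_eval p q w e0 = Some y \<Longrightarrow> inc p q w e0 \<Longrightarrow>
    xsq ! (length xsq - 2) < y \<Longrightarrow> y < last xsq \<Longrightarrow>
    \<exists>q' v y'. good q' xsq dq \<and> q \<subseteq>\<^sub>m q' \<and> word_eval p q' (v @ w) e0 = Some y' \<and>
      inc p q' (v @ w) e0 \<and> (\<forall>l\<in>set v. fst l = T) \<and> xsq ! (length xsq - 2) < y' \<and> y' < last xsq \<and>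
      (\<forall>x\<in>Dp p q'. x < last xsq \<longrightarrow> x \<le> y')"
proof (induction "card {x \<in> Dp p q. y < x}" arbitrary: q w y rule: less_induct)
  case less
  note gq = less.prems(1) and ev = less.prems(2) and inc = less.prems(3)
  let ?k = "length xsq - 2"
  have neq: "xsq \<noteq> []" using gq unfolding good_def by auto
  have "Suc (length xsq - 2) = length xsq - Suc 0" using len by arith
  then have lastq: "last xsq = xsq ! (?k + 1)" using len neq by (simp add: last_conv_nth)
  have k: "?k + 1 < length xsq" using len by arith
  have fin: "finite (Dp p q)" using finite_Dp[OF good_pi[OF gp] good_pi[OF gq]] .
  show ?case
  proof (cases "\<forall>x\<in>Dp p q. x < last xsq \<longrightarrow> x \<le> y")
    case True
    then show ?thesis using less.prems map_le_refl[of q]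
      by (rule_tac exI[of _ q], rule_tac exI[of _ "[]"], rule_tac exI[of _ y]) auto
  next
    case False
    define U where "U = {x \<in> Dp p q. y < x}"
    have Uf: "finite U" using fin unfolding U_def by simp
    obtain x0 where x0: "x0 \<in> Dp p q" "y < x0" "x0 < last xsq" using False by auto
    have x0U: "x0 \<in> U" using x0 unfolding U_def by auto
    define s where "s = Min U"
    have sU: "s \<in> U" using Uf x0U unfolding s_def by (metis Min_in empty_iff)
    have sle: "s \<le> x" if "x \<in> U" for x using Uf that unfolding s_def by simp
    have ts: "\<forall>x\<in>Dp p q. y < x \<longrightarrow> s \<le> x" using sle unfolding U_def by auto
    have ys: "y \<le> s" "y < s" "s \<in> Dp p q" using sU unfolding U_def by auto
    have sM: "s < xsq ! (?k + 1)" using sle[OF x0U] x0 lastq by simp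
    have G1: "(T = S \<and> xsq = xsp \<and> dq = dp) \<or> (T = T \<and> xsq = xsq \<and> dq = dq)" by simp
    have i: "?k + 1 < length xsq" "xsq ! ?k < y" "y < xsq ! (?k + 1)" using k less.prems lastq by auto
    obtain p' q' y' where r: "good p' xsp dp" "good q' xsq dq" "p \<subseteq>\<^sub>m p'" "q \<subseteq>\<^sub>m q'" "p' = p"
      "word_eval p' q' ((T, dq ?k) # w) e0 = Some y'" "inc p' q' ((T, dq ?k) # w) e0" "y < y'"
      "y' < xsq!(?k+1)" "Dp p' q' \<subseteq> Dp p q \<union> {y, y'}" "y' \<in> Dp p q \<or> s < y'"
      using gstep[OF gp gq G1 i ev inc ys(1) sM ts] by fastforce
    have "s \<le> y'" using r(11) ts r(8) by auto
    then have lt: "card {x \<in> Dp p q'. y' < x} < card {x \<in> Dp p q. y < x}"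
      using card_step(2)[OF fin r(10)[unfolded r(5)] r(8) ys(3) ys(2)] by simp
    obtain q'' v y'' where h: "good q'' xsq dq" "q' \<subseteq>\<^sub>m q''" "word_eval p q'' (v @ ((T, dq ?k) # w)) e0 = Some y''"
      "inc p q'' (v @ ((T, dq ?k) # w)) e0" "\<forall>l\<in>set v. fst l = T" "xsq ! ?k < y''" "y'' < last xsq"
      "\<forall>x\<in>Dp p q''. x < last xsq \<longrightarrow> x \<le> y''"
      using less.hyps[OF lt r(2) r(6)[unfolded r(5)] r(7)[unfolded r(5)]] r(8) i(2) r(9) lastq by force
    show ?thesis using h r(4) map_le_trans[OF r(4) h(2)]
      by (rule_tac exI[of _ q''], rule_tac exI[of _ "v @ [(T, dq ?k)]"], rule_tac exI[of _ y'']) auto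
  qed
qed



lemma Ess_open:
  assumes g: "good p xs d"
  shows "Ess p \<subseteq> {hd xs<..<last xs}"
proof
  fix x assume x: "x \<in> Ess p"
  then have x1: "x \<in> dom p \<union> ran p" and x2: "x \<noteq> hd xs" "x \<noteq> last xs"
    unfolding Ess_def good_Min[OF g] good_Max[OF g] by auto
  have "hd xs \<le> x \<and> x \<le> last xs" using x1 good_dom[OF g] good_ran[OF g] by (auto simp: ran_def)
  then show "x \<in> {hd xs<..<last xs}" using x2 by auto
qed

lemma main_p:
  assumes ep: "elementary_pair p q"
  shows "\<exists>p' q' w. liberates_p p q p' q' w"
proof -
  have pip: "partial_iso p" and piq: "partial_iso q" and ip: "informative p" and iq: "informative q"
    and mm: "Min (dom p) = Min (dom q)" "Max (dom p) = Max (dom q)"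
    and fx: "Fix p \<inter> Fix q = {Min (dom p), Max (dom p)}"
    using ep unfolding elementary_pair_def by auto
  obtain xsp dp where gp: "good p xsp dp" and hp: "hd xsp = Min (dom p)" "last xsp = Max (dom p)"
    using informative_good[OF ip pip] by blast
  obtain xsq dq where gq: "good q xsq dq" and hq: "hd xsq = Min (dom q)" "last xsq = Max (dom q)"
    using informative_good[OF iq piq] by blast
  have e: "hd xsq = hd xsp" "last xsq = last xsp" using hp hq mm by auto
  have disj: "set xsp \<inter> set xsq \<subseteq> {hd xsp, last xsp}"
  proof
    fix x assume "x \<in> set xsp \<inter> set xsq"
    then have "p x = Some x" "q x = Some x" using good_fix[OF gp] good_fix[OF gq] by auto
    then have "x \<in> Fix p \<inter> Fix q" unfolding Fix_def by auto
    then show "x \<in> {hd xsp, last xsp}" using fx hp by simp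
  qed
  define E where "E = Ess p \<union> Ess q"
  have Esub: "E \<subseteq> {hd xsp<..<last xsp}" using Ess_open[OF gp] Ess_open[OF gq] e unfolding E_def by auto
  have finE: "finite E" unfolding E_def Ess_def using pip piq finite_ran_pi
    by (auto simp: partial_iso_def)
  show ?thesis
  proof (cases "E = {}")
    case True
    have "increasing_interval q (Max (dom q)) (Max (dom q))"
      unfolding increasing_interval_def using good_last[OF gq] hq by auto
    then have "liberates_p p q p q [(T, True)]"
      unfolding liberates_p_def using True pip piq ip iq map_le_refl
      unfolding E_def by (auto simp: reduced_def intro!: exI[of _ "Max (dom q)"])
    then show ?thesis by blast
  next
    case False
    define e0 where "e0 = Min E"
    have e0E: "e0 \<in> E" using finE False unfolding e0_def by simp
    have e0le: "e0 \<le> c" if "c \<in> E" for c using finE that unfolding e0_def by simp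
    have e0o: "hd xsp < e0" "e0 < last xsp" using e0E Esub by auto
    have neq: "xsq \<noteq> []" using gq unfolding good_def by simp
    have len: "2 \<le> length xsq"
    proof (rule ccontr)
      assume "\<not> 2 \<le> length xsq"
      moreover have "length xsq \<noteq> 0" using neq by simp
      ultimately have "length xsq = 1" by linarith
      then have "hd xsq = last xsq" by (cases xsq) auto
      then show False using e e0o by simp
    qed
    let ?k = "length xsq - 2"
    have "Suc (length xsq - 2) = length xsq - Suc 0" using len by arith
    then have lastq: "last xsq = xsq ! (?k + 1)" using len neq by (simp add: last_conv_nth)
    have k: "?k + 1 < length xsq" using len by arith
    obtain p1 q1 w1 y1 where c1: "good p1 xsp dp" "good q1 xsq dq" "p \<subseteq>\<^sub>m p1" "q \<subseteq>\<^sub>m q1"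
      "word_eval p1 q1 w1 e0 = Some y1" "inc p1 q1 w1 e0" "xsq ! ?k < y1" "y1 < last xsp"
      using climb[OF e disj len gp gq, of "[]" e0 e0] e0o by auto
    obtain p2 q2 where c2: "good p2 xsp dp" "good q2 xsq dq" "p1 \<subseteq>\<^sub>m p2" "q1 \<subseteq>\<^sub>m q2"
      "\<forall>c\<in>E. word_eval p2 q2 w1 c \<noteq> None"
      using define_all[OF e finE Esub c1(1,2), of w1] by blast
    have ev2: "word_eval p2 q2 w1 e0 = Some y1" and inc2: "inc p2 q2 w1 e0"
      using good_trans[OF c1(1,2) c2(1,2,3,4)] c1(5,6) by auto
    obtain q3 v y3 where c3: "good q3 xsq dq" "q2 \<subseteq>\<^sub>m q3" "word_eval p2 q3 (v @ w1) e0 = Some y3"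
      "inc p2 q3 (v @ w1) e0" "\<forall>l\<in>set v. fst l = T" "xsq ! ?k < y3" "y3 < last xsq"
      "\<forall>x\<in>Dp p2 q3. x < last xsq \<longrightarrow> x \<le> y3"
      using push[OF c2(1) len c2(2) ev2 inc2] c1(7,8) e by auto
    have G1: "(T = S \<and> xsq = xsp \<and> dq = dp) \<or> (T = T \<and> xsq = xsq \<and> dq = dq)" by simp
    have i: "?k + 1 < length xsq" "xsq ! ?k < y3" "y3 < xsq ! (?k + 1)" using k c3 lastq by auto
    have t3: "\<forall>x\<in>Dp p2 q3. y3 < x \<longrightarrow> y3 \<le> x" by auto
    obtain p4 q4 y4 where c4: "good p4 xsp dp" "good q4 xsq dq" "p2 \<subseteq>\<^sub>m p4" "q3 \<subseteq>\<^sub>m q4" "p4 = p2"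
      "word_eval p4 q4 ((T, dq ?k) # (v @ w1)) e0 = Some y4" "inc p4 q4 ((T, dq ?k) # (v @ w1)) e0" "y3 < y4"
      "y4 < xsq!(?k+1)"
      using gstep[OF c2(1) c3(1) G1 i c3(3,4) order.refl i(3) t3] by fastforce
    have q24: "q2 \<subseteq>\<^sub>m q4" using map_le_trans[OF c3(2) c4(4)] .
    define C' where "C' = (\<lambda>c. the (word_eval p2 q4 w1 c)) ` E"
    have ev24: "word_eval p2 q4 w1 c = word_eval p2 q2 w1 c" if "c \<in> E" for c
      using c2(5) that good_trans(1)[OF c2(1,2) c2(1) c4(2) map_le_refl q24] by force
    have C'f: "finite C'" using finE unfolding C'_def by simp
    have C's: "C' \<subseteq> {hd xsp<..<last xsp}"
    proof
      fix y assume "y \<in> C'"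
      then obtain c where c: "c \<in> E" "y = the (word_eval p2 q4 w1 c)" unfolding C'_def by auto
      then have "word_eval p2 q4 w1 c = Some y" using c2(5) ev24 by auto
      then show "y \<in> {hd xsp<..<last xsp}" using word_open[OF c2(1) c4(2) e] c Esub by fastforce
    qed
    define u where "u = (T, dq ?k) # v"
    obtain p5 q5 where c5: "good p5 xsp dp" "good q5 xsq dq" "p2 \<subseteq>\<^sub>m p5" "q4 \<subseteq>\<^sub>m q5"
      "\<forall>c\<in>C'. word_eval p5 q5 u c \<noteq> None" "(\<forall>l\<in>set u. fst l = T) \<longrightarrow> p5 = p2"
      using define_all[OF e C'f C's c2(1) c4(2), of u] by blast
    have p5: "p5 = p2" using c5(6) c3(5) unfolding u_def by auto
    define W where "W = u @ w1"
    have W: "W = (T, dq ?k) # (v @ w1)" unfolding W_def u_def by simp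
    have q45: "q4 \<subseteq>\<^sub>m q5" using c5(4) .
    have a4: "word_eval p2 q4 W e0 = Some y4" "inc p2 q4 W e0" using c4(5,6,7) W by simp_all
    have evW: "word_eval p2 q5 W e0 = Some y4" and incW: "inc p2 q5 W e0"
      using good_trans[OF c2(1) c4(2) c2(1) c5(2) map_le_refl q45] a4 by blast+
    have defW: "word_eval p2 q5 W c \<noteq> None" if c: "c \<in> E" for c
    proof -
      obtain d where d: "word_eval p2 q4 w1 c = Some d" using c2(5) ev24 c by fastforce
      then have d5: "word_eval p2 q5 w1 c = Some d"
        using good_trans(1)[OF c2(1) c4(2) c2(1) c5(2) map_le_refl q45] by blast
      have "d \<in> C'" using d c unfolding C'_def by force
      then have "word_eval p2 q5 u d \<noteq> None" using c5(5) p5 by auto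
      then show ?thesis using d5 unfolding W_def by (simp add: word_eval_append)
    qed
    have pi2: "partial_iso p2" and pi5: "partial_iso q5" using good_pi c2(1) c5(2) by auto
    have red: "reduced W" using inc_reduced[OF pi2 pi5 incW] .
    have dom2: "Min (dom p2) = Min (dom p)" "Max (dom p2) = Max (dom p)"
      using good_Min[OF c2(1)] good_Max[OF c2(1)] hp by auto
    have dom5: "Min (dom q5) = Min (dom q)" "Max (dom q5) = Max (dom q)"
      using good_Min[OF c5(2)] good_Max[OF c5(2)] hq by auto
    have bound: "e < y4" if "e \<in> Ess p2" for e
    proof -
      have "e \<in> Dp p2 q3" using that unfolding Ess_def Dp_def by auto
      moreover have "e < last xsq" using Ess_open[OF c2(1)] that e by auto
      ultimately show ?thesis using c3(8) c4(8) by fastforce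
    qed
    have evE: "the (word_eval p2 q5 W c) \<in> {xsq ! ?k<..<Max (dom q)}" if c: "c \<in> E" for c
    proof -
      obtain x where x: "word_eval p2 q5 W c = Some x" using defW c by auto
      have "y4 \<le> x"
      proof (cases "c = e0")
        case True then show ?thesis using x evW by simp
      next
        case False
        then have "e0 < c" using e0le c by force
        then show ?thesis using word_eval_strict[OF pi2 pi5 evW x] by simp
      qed
      moreover have "x < last xsp" using word_open[OF c2(1) c5(2) e x] c Esub by auto
      ultimately show ?thesis using x c4(8) c3(6) hp mm by auto
    qed
    have intv: "if snd (hd W) then increasing_interval q5 (xsq ! ?k) (Max (dom q))
                else decreasing_interval q5 (xsq ! ?k) (Max (dom q))"
      using c5(2) k lastq hq unfolding good_def W by auto
    have "liberates_p p q p2 q5 W"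
      unfolding liberates_p_def
    proof (intro conjI)
      show "partial_iso p2" "partial_iso q5" using pi2 pi5 .
      show "p \<subseteq>\<^sub>m p2" using map_le_trans[OF c1(3) c2(3)] .
      show "q \<subseteq>\<^sub>m q5" using map_le_trans[OF map_le_trans[OF c1(4) c2(4)] map_le_trans[OF q24 q45]] .
      show "reduced W" using red .
      show "informative p2" "informative q5" using good_informative c2(1) c5(2) by auto
      show "Min (dom p2) = Min (dom p)" "Min (dom q5) = Min (dom q)"
        "Max (dom p2) = Max (dom p)" "Max (dom q5) = Max (dom q)" using dom2 dom5 by auto
      show "W \<noteq> []" "fst (hd W) = T" using W by auto
      show "\<forall>c\<in>Ess p \<union> Ess q. word_eval p2 q5 W c \<noteq> None" using defW unfolding E_def by auto
      show "Ess p \<union> Ess q \<noteq> {} \<longrightarrow> (\<forall>e\<in>Ess p2. e < the (word_eval p2 q5 W (Min (Ess p \<union> Ess q))))"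
        using bound evW unfolding e0_def E_def by auto
      show "\<exists>a. (\<forall>c\<in>Ess p \<union> Ess q. the (word_eval p2 q5 W c) \<in> {a<..<Max (dom q)}) \<and>
          (if snd (hd W) then increasing_interval q5 a (Max (dom q))
           else decreasing_interval q5 a (Max (dom q)))"
        using evE intv unfolding E_def by blast
    qed
    then show ?thesis by blast
  qed
qed



fun sw :: "gen \<Rightarrow> gen" where "sw S = T" | "sw T = S"

definition swapw :: "word \<Rightarrow> word" where "swapw w = map (\<lambda>(g, b). (sw g, b)) w"

lemma act_sw: "act q p (sw (fst l), snd l) = act p q l"
  by (cases l, rename_tac G b, case_tac G; case_tac b) auto

lemma word_eval_swap: "word_eval q p (swapw w) c = word_eval p q w c"
proof (induction w)
  case Nil then show ?case by (simp add: swapw_def)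
next
  case (Cons l w)
  have "swapw (l # w) = (sw (fst l), snd l) # swapw w" unfolding swapw_def by (cases l) auto
  then show ?case using Cons act_sw[of q p l] by (simp split: option.splits)
qed

lemma sw_inj: "sw a = sw b \<longleftrightarrow> a = b"
  by (cases a; cases b) auto

lemma reduced_swap: "reduced (swapw w) = reduced w"
  unfolding reduced_def swapw_def by (auto simp: case_prod_beta sw_inj)

lemma hd_swap: "w \<noteq> [] \<Longrightarrow> hd (swapw w) = (sw (fst (hd w)), snd (hd w))"
  unfolding swapw_def by (cases w) auto

lemma swapw_ne: "swapw w = [] \<longleftrightarrow> w = []"
  unfolding swapw_def by simp

lemma main_q:
  assumes ep: "elementary_pair p q"
  shows "\<exists>p' q' w. liberates_q p q p' q' w"
proof -
  have "elementary_pair q p" using ep unfolding elementary_pair_def by (auto simp: Int_commute)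
  then obtain q' p' w where l: "liberates_p q p q' p' w" using main_p by blast
  have ne: "w \<noteq> []" using l unfolding liberates_p_def by simp
  have "liberates_q p q p' q' (swapw w)"
    using l ne unfolding liberates_p_def liberates_q_def
    by (simp add: word_eval_swap reduced_swap hd_swap swapw_ne Un_commute)
  then show ?thesis by blast
qed

theorem lemma3p6:
  assumes "elementary_pair p q"
  shows "(\<exists>p' q' w. liberates_p p q p' q' w) \<and> (\<exists>p' q' w. liberates_q p q p' q' w)"
  using main_p[OF assms] main_q[OF assms] by blast

end
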